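(* Let $\mathcal{H}$ be finite and let $D$ consist of $n$ i.i.d. samples from $\mathcal{D}$. With probability $1-\delta$, for all $f\in\Delta(\mathcal{H})$ and all $\lambda\in\Lambda_C$, $|\mathcal{L}_{\mathcal{D}}(f,\lambda)-\mathcal{L}_D(f,\lambda)|\le\sqrt{\frac{\ln(4|\mathcal{H}|/\delta)}{2n}}+C\sqrt{\frac{8\ln(4|\mathcal{H}|Ndm/\delta)}{n}}.$
   Context: Data $(x,y)\in\mathcal{X}\times[-1,1]^d$ drawn from $\mathcal{D}$; $\mathcal{H}$ a class of functions $h:\mathcal{X}\to[-1,1]^d$. Receivers $i\in[N]$ have finite action sets $\mathcal{A}_i$, $|\mathcal{A}_i|=m$, utilities $v_i:\mathcal{A}_i\times[-1,1]^d\to[0,1]$; $b_i(z,a)=1$ if $a=\arg\max_{a'}v_i(a',z)$ (fixed tie-breaking), else $0$; $b(z,\mathbf a)=\prod_ib_i(z,a_i)$, $\mathcal{A}=\prod_i\mathcal{A}_i$; sender utility $u:\mathcal{A}\times[-1,1]^d\to[0,1]$; $\gamma\ge0$. $I=\{(s,i,j,a):s\in\{\pm1\},i\in[N],j\in[d],a\in\mathcal{A}_i\}$, $\Lambda_C=\{\lambda\in\mathbb{R}_{\ge0}^I:\|\lambda\|_1\le C\}$. For a distribution $P$ (either $\mathcal{D}$ or the empirical distribution of $D$), $\mathcal{L}_P(f,\lambda)=-\mathbb{E}_{h\sim f}\mathbb{E}_P[\sum_{\mathbf a}u(\mathbf a,y)b(h(x),\mathbf a)]+\sum_{(s,i,j,a)\in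 I}\lambda_{s,i,j,a}\,s\big(\mathbb{E}_{h\sim f}\mathbb{E}_P[(h(x)_j-y_j)b_i(h(x),a)]-\gamma\big)$. *)

theory Defs
  imports "HOL-Probability.Probability"
begin

text \<open>Points z, y live in real^'d, so d = CARD('d); coordinates j range over 'd.
  Receivers are i < N, with action sets A i.  Fixed tie-breaking is modelled by a
  best-response function br: br i z is the (tie-broken) argmax of v i (-) z over A i.\<close>

definition in_cube :: "real^'d \<Rightarrow> bool" where
  "in_cube z \<longleftrightarrow> (\<forall>j. \<bar>z $ j\<bar> \<le> 1)"

definition bi :: "(nat \<Rightarrow> real^'d \<Rightarrow> 'a) \<Rightarrow> nat \<Rightarrow> real^'d \<Rightarrow> 'a \<Rightarrow> real" where
  "bi br i z a = (if a = br i z then 1 else 0)"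

definition bprof :: "nat \<Rightarrow> (nat \<Rightarrow> real^'d \<Rightarrow> 'a) \<Rightarrow> real^'d \<Rightarrow> (nat \<Rightarrow> 'a) \<Rightarrow> real" where
  "bprof N br z a = (\<Prod>i<N. bi br i z (a i))"

definition Iset :: "nat \<Rightarrow> (nat \<Rightarrow> 'a set) \<Rightarrow> (int \<times> nat \<times> 'd \<times> 'a) set" where
  "Iset N A = {(s, i, j, a). s \<in> {-1, 1} \<and> i < N \<and> a \<in> A i}"

definition LambdaC :: "nat \<Rightarrow> (nat \<Rightarrow> 'a set) \<Rightarrow> real \<Rightarrow> ((int \<times> nat \<times> 'd \<times> 'a) \<Rightarrow> real) set" where
  "LambdaC N A C = {lam. (\<forall>t\<in>Iset N A. lam t \<ge> 0) \<and> (\<Sum>t\<in>Iset N A. \<bar>lam t\<bar>) \<le> C}"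

definition Delta :: "'h set \<Rightarrow> ('h \<Rightarrow> real) set" where
  "Delta H = {f. (\<forall>h\<in>H. f h \<ge> 0) \<and> (\<Sum>h\<in>H. f h) = 1}"

text \<open>Lagrangian L_P(f,lambda), where P is given by its expectation operator E.\<close>
definition Lag ::
  "((('x \<times> (real^'d)) \<Rightarrow> real) \<Rightarrow> real) \<Rightarrow> ('x \<Rightarrow> real^'d) set \<Rightarrow> nat \<Rightarrow> (nat \<Rightarrow> 'a set)
   \<Rightarrow> (nat \<Rightarrow> real^'d \<Rightarrow> 'a) \<Rightarrow> ((nat \<Rightarrow> 'a) \<Rightarrow> real^'d \<Rightarrow> real) \<Rightarrow> real
   \<Rightarrow> (('x \<Rightarrow> real^'d) \<Rightarrow> real) \<Rightarrow> ((int \<times> nat \<times> 'd \<times> 'a) \<Rightarrow> real) \<Rightarrow> real" where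
  "Lag E H N A br u \<gamma> f lam =
     - (\<Sum>h\<in>H. f h * E (\<lambda>p. \<Sum>a\<in>PiE {..<N} A. u a (snd p) * bprof N br (h (fst p)) a))
     + (\<Sum>(s, i, j, a)\<in>Iset N A. lam (s, i, j, a) * of_int s *
          ((\<Sum>h\<in>H. f h * E (\<lambda>p. (h (fst p) $ j - snd p $ j) * bi br i (h (fst p)) a)) - \<gamma>))"

definition emp_E :: "nat \<Rightarrow> (nat \<Rightarrow> 'z) \<Rightarrow> ('z \<Rightarrow> real) \<Rightarrow> real" where
  "emp_E n S g = (\<Sum>k<n. g (S k)) / real n"

end

theory Submission
  imports Defs
begin

lemma indep_coords:
  assumes M: "prob_space M" and n: "n > 0"
  shows "prob_space.indep_vars (PiM {..<n} (\<lambda>_. M)) (\<lambda>_. M) (\<lambda>k S. S k) {..<n}"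
proof -
  interpret product_prob_space "\<lambda>_. M" "{..<n}"
    by (simp add: M product_prob_space.intro product_sigma_finite.intro prob_space_imp_sigma_finite product_prob_space_axioms.intro)
  have ne: "{..<n} \<noteq> {}" using n by auto
  show ?thesis
  proof (subst P.indep_vars_iff_distr_eq_PiM'[OF ne])
    show "distr (Pi\<^sub>M {..<n} (\<lambda>_. M)) (Pi\<^sub>M {..<n} (\<lambda>_. M)) (\<lambda>x. restrict x {..<n}) =
      (Pi\<^sub>M {..<n} (\<lambda>i. distr (Pi\<^sub>M {..<n} (\<lambda>_. M)) M (\<lambda>x. x i)))"
    proof -
      have "(Pi\<^sub>M {..<n} (\<lambda>i. distr (Pi\<^sub>M {..<n} (\<lambda>_. M)) M (\<lambda>x. x i))) = Pi\<^sub>M {..<n} (\<lambda>_. M)"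
        by (intro PiM_cong refl PiM_component) auto
      moreover have "distr (Pi\<^sub>M {..<n} (\<lambda>_. M)) (Pi\<^sub>M {..<n} (\<lambda>_. M)) (\<lambda>x. restrict x {..<n}) = Pi\<^sub>M {..<n} (\<lambda>_. M)"
      proof -
        have "distr (Pi\<^sub>M {..<n} (\<lambda>_. M)) (Pi\<^sub>M {..<n} (\<lambda>_. M)) (\<lambda>x. restrict x {..<n})
            = distr (Pi\<^sub>M {..<n} (\<lambda>_. M)) (Pi\<^sub>M {..<n} (\<lambda>_. M)) (\<lambda>x. x)"
          by (intro distr_cong) (auto simp: space_PiM PiE_def extensional_def restrict_def fun_eq_iff)
        then show ?thesis by simp
      qed
      ultimately show ?thesis by simp
    qed
  qed auto
qed

lemma hoeff_PiM:
  fixes g :: "'z \<Rightarrow> real"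
  assumes M: "prob_space M" and g: "g \<in> borel_measurable M"
    and gb: "\<forall>p\<in>space M. lo \<le> g p \<and> g p \<le> hi" and lohi: "lo < hi" and n: "n > 0" and t: "t \<ge> 0"
  shows "measure (PiM {..<n} (\<lambda>_. M)) {S\<in>space (PiM {..<n} (\<lambda>_. M)). t \<le> \<bar>emp_E n S g - integral\<^sup>L M g\<bar>}
     \<le> 2 * exp (- 2 * real n * t\<^sup>2 / (hi - lo)\<^sup>2)"
proof -
  interpret product_prob_space "\<lambda>_. M" "{..<n}"
    by (simp add: M product_prob_space.intro product_sigma_finite.intro prob_space_imp_sigma_finite product_prob_space_axioms.intro)
  define X :: "nat \<Rightarrow> (nat \<Rightarrow> 'z) \<Rightarrow> real" where "X = (\<lambda>k S. g (S k))"
  have ind: "P.indep_vars (\<lambda>_. borel) X {..<n}"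
    unfolding X_def
    by (rule P.indep_vars_compose2[OF indep_coords[OF M n]]) (use g in auto)
  have EX: "P.expectation (X k) = integral\<^sup>L M g" if "k < n" for k
  proof -
    have "P.expectation (X k) = integral\<^sup>L (distr (PiM {..<n} (\<lambda>_. M)) M (\<lambda>S. S k)) g"
      unfolding X_def using that g by (subst integral_distr) auto
    also have "\<dots> = integral\<^sup>L M g" using that by (subst PiM_component) auto
    finally show ?thesis .
  qed
  interpret Hoeffding_ineq "PiM {..<n} (\<lambda>_. M)" "{..<n}" X "\<lambda>_. lo" "\<lambda>_. hi" "real n * integral\<^sup>L M g"
  proof unfold_locales
    fix k assume k: "k \<in> {..<n}"
    show "AE x in Pi\<^sub>M {..<n} (\<lambda>_. M). X k x \<in> {lo..hi}"
      unfolding X_def using k gb by (intro AE_I2) (auto simp: space_PiM)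
  qed (use ind EX in auto)
  have pos: "(\<Sum>i\<in>{..<n}. (hi - lo)\<^sup>2) > 0" using n lohi by simp
  have nt: "real n * t \<ge> 0" using t by simp
  have "{S\<in>space (PiM {..<n} (\<lambda>_. M)). t \<le> \<bar>emp_E n S g - integral\<^sup>L M g\<bar>}
     = {S\<in>space (PiM {..<n} (\<lambda>_. M)). real n * t \<le> \<bar>(\<Sum>k\<in>{..<n}. X k S) - real n * integral\<^sup>L M g\<bar>}"
  proof -
    have "t \<le> \<bar>emp_E n S g - integral\<^sup>L M g\<bar> \<longleftrightarrow> real n * t \<le> \<bar>(\<Sum>k\<in>{..<n}. X k S) - real n * integral\<^sup>L M g\<bar>" for S
    proof -
      have "(\<Sum>k\<in>{..<n}. X k S) - real n * integral\<^sup>L M g = real n * (emp_E n S g - integral\<^sup>L M g)"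
        using n by (simp add: emp_E_def X_def field_simps)
      then show ?thesis using n by (simp add: abs_mult)
    qed
    then show ?thesis by auto
  qed
  also have "measure (PiM {..<n} (\<lambda>_. M)) \<dots> \<le> 2 * exp (-2 * (real n * t)\<^sup>2 / (\<Sum>i\<in>{..<n}. (hi - lo)\<^sup>2))"
    by (rule Hoeffding_ineq_abs_ge[OF nt pos])
  also have "-2 * (real n * t)\<^sup>2 / (\<Sum>i\<in>{..<n}. (hi - lo)\<^sup>2) = - 2 * real n * t\<^sup>2 / (hi - lo)\<^sup>2"
  proof -
    have "(\<Sum>i\<in>{..<n}. (hi - lo)\<^sup>2) = real n * (hi - lo)\<^sup>2" by simp
    moreover have "(hi - lo)\<^sup>2 > 0" using lohi by simp
    ultimately show ?thesis using n by (simp add: power2_eq_square)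
  qed
  finally show ?thesis .
qed

lemma abs_wsum_le:
  fixes f d :: "'h \<Rightarrow> real"
  assumes "\<forall>h\<in>H. f h \<ge> 0" "(\<Sum>h\<in>H. f h) = 1" "\<forall>h\<in>H. \<bar>d h\<bar> \<le> t"
  shows "\<bar>\<Sum>h\<in>H. f h * d h\<bar> \<le> t"
proof -
  have "\<bar>\<Sum>h\<in>H. f h * d h\<bar> \<le> (\<Sum>h\<in>H. \<bar>f h * d h\<bar>)" by (rule sum_abs)
  also have "\<dots> \<le> (\<Sum>h\<in>H. f h * t)"
    by (intro sum_mono) (use assms in \<open>auto simp: abs_mult intro: mult_left_mono\<close>)
  also have "\<dots> = t" using assms(2) by (simp add: sum_distrib_right[symmetric])
  finally show ?thesis .
qed

lemma lag_diff:
  fixes E1 E2 :: "(('x \<times> (real^'d)) \<Rightarrow> real) \<Rightarrow> real"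
  assumes f: "f \<in> Delta H" and lam: "lam \<in> LambdaC N A C" and t2: "t2 \<ge> 0"
    and o: "\<forall>h\<in>H. \<bar>E1 (\<lambda>p. \<Sum>a\<in>PiE {..<N} A. u a (snd p) * bprof N br (h (fst p)) a)
                 - E2 (\<lambda>p. \<Sum>a\<in>PiE {..<N} A. u a (snd p) * bprof N br (h (fst p)) a)\<bar> \<le> t1"
    and c: "\<forall>h\<in>H. \<forall>i<N. \<forall>a\<in>A i. \<forall>j. \<bar>E1 (\<lambda>p. (h (fst p) $ j - snd p $ j) * bi br i (h (fst p)) a)
                 - E2 (\<lambda>p. (h (fst p) $ j - snd p $ j) * bi br i (h (fst p)) a)\<bar> \<le> t2"
  shows "\<bar>Lag E1 H N A br u \<gamma> f lam - Lag E2 H N A br u \<gamma> f lam\<bar> \<le> t1 + C * t2"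
proof -
  define O1 where "O1 h = E1 (\<lambda>p. \<Sum>a\<in>PiE {..<N} A. u a (snd p) * bprof N br (h (fst p)) a)" for h
  define O2 where "O2 h = E2 (\<lambda>p. \<Sum>a\<in>PiE {..<N} A. u a (snd p) * bprof N br (h (fst p)) a)" for h
  define C1 where "C1 i j a = (\<Sum>h\<in>H. f h * E1 (\<lambda>p. (h (fst p) $ j - snd p $ j) * bi br i (h (fst p)) a))" for i j a
  define C2 where "C2 i j a = (\<Sum>h\<in>H. f h * E2 (\<lambda>p. (h (fst p) $ j - snd p $ j) * bi br i (h (fst p)) a))" for i j a
  have fD: "\<forall>h\<in>H. f h \<ge> 0" "(\<Sum>h\<in>H. f h) = 1" using f by (auto simp: Delta_def)
  have lD: "\<forall>t\<in>Iset N A. lam t \<ge> 0" "(\<Sum>t\<in>Iset N A. \<bar>lam t\<bar>) \<le> C" using lam by (auto simp: LambdaC_def)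
  have eq: "Lag E1 H N A br u \<gamma> f lam - Lag E2 H N A br u \<gamma> f lam =
      - (\<Sum>h\<in>H. f h * (O1 h - O2 h)) + (\<Sum>t\<in>Iset N A. (case t of (s, i, j, a) \<Rightarrow> lam (s, i, j, a) * of_int s * (C1 i j a - C2 i j a)))"
  proof -
    have a: "(\<Sum>h\<in>H. f h * (O1 h - O2 h)) = (\<Sum>h\<in>H. f h * O1 h) - (\<Sum>h\<in>H. f h * O2 h)"
      by (simp add: right_diff_distrib sum_subtractf)
    have b: "(\<Sum>t\<in>Iset N A. (case t of (s, i, j, a) \<Rightarrow> lam (s, i, j, a) * of_int s * (C1 i j a - C2 i j a)))
      = (\<Sum>t\<in>Iset N A. (case t of (s, i, j, a) \<Rightarrow> lam (s, i, j, a) * of_int s * (C1 i j a - \<gamma>)))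
       - (\<Sum>t\<in>Iset N A. (case t of (s, i, j, a) \<Rightarrow> lam (s, i, j, a) * of_int s * (C2 i j a - \<gamma>)))"
      by (subst sum_subtractf[symmetric], rule sum.cong) (auto simp: algebra_simps split: prod.splits)
    show ?thesis using a b unfolding Lag_def O1_def O2_def C1_def C2_def by linarith
  qed
  have p1: "\<bar>\<Sum>h\<in>H. f h * (O1 h - O2 h)\<bar> \<le> t1"
    by (rule abs_wsum_le[OF fD]) (use o in \<open>auto simp: O1_def O2_def\<close>)
  have cb: "\<bar>C1 i j a - C2 i j a\<bar> \<le> t2" if "i < N" "a \<in> A i" for i j a
  proof -
    have "C1 i j a - C2 i j a = (\<Sum>h\<in>H. f h * (E1 (\<lambda>p. (h (fst p) $ j - snd p $ j) * bi br i (h (fst p)) a) - E2 (\<lambda>p. (h (fst p) $ j - snd p $ j) * bi br i (h (fst p)) a)))"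
      by (simp add: C1_def C2_def right_diff_distrib sum_subtractf)
    also have "\<bar>\<dots>\<bar> \<le> t2" by (rule abs_wsum_le[OF fD]) (use c that in auto)
    finally show ?thesis .
  qed
  have p2: "\<bar>\<Sum>t\<in>Iset N A. (case t of (s, i, j, a) \<Rightarrow> lam (s, i, j, a) * of_int s * (C1 i j a - C2 i j a))\<bar> \<le> C * t2"
  proof -
    have "\<bar>\<Sum>t\<in>Iset N A. (case t of (s, i, j, a) \<Rightarrow> lam (s, i, j, a) * of_int s * (C1 i j a - C2 i j a))\<bar>
       \<le> (\<Sum>t\<in>Iset N A. \<bar>case t of (s, i, j, a) \<Rightarrow> lam (s, i, j, a) * of_int s * (C1 i j a - C2 i j a)\<bar>)"
      by (rule sum_abs)
    also have "\<dots> \<le> (\<Sum>t\<in>Iset N A. \<bar>lam t\<bar> * t2)"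
    proof (rule sum_mono)
      fix t :: "int \<times> nat \<times> 'd \<times> 'a" assume t: "t \<in> Iset N A"
      obtain s i j a where st: "t = (s, i, j, a)" by (cases t) auto
      have s: "\<bar>(of_int s :: real)\<bar> = 1" and ia: "i < N" "a \<in> A i" using t st by (auto simp: Iset_def)
      have "\<bar>lam t * of_int s * (C1 i j a - C2 i j a)\<bar> = \<bar>lam t\<bar> * \<bar>C1 i j a - C2 i j a\<bar>"
        by (simp add: abs_mult s)
      also have "\<dots> \<le> \<bar>lam t\<bar> * t2" by (intro mult_left_mono cb ia) auto
      finally show "\<bar>case t of (s, i, j, a) \<Rightarrow> lam (s, i, j, a) * of_int s * (C1 i j a - C2 i j a)\<bar> \<le> \<bar>lam t\<bar> * t2"
        by (simp add: st)
    qed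
    also have "\<dots> = (\<Sum>t\<in>Iset N A. \<bar>lam t\<bar>) * t2" by (simp add: sum_distrib_right)
    also have "\<dots> \<le> C * t2" by (intro mult_right_mono lD t2)
    finally show ?thesis .
  qed
  have gen: "\<And>x y :: real. \<bar>x\<bar> \<le> t1 \<Longrightarrow> \<bar>y\<bar> \<le> C * t2 \<Longrightarrow> \<bar>- x + y\<bar> \<le> t1 + C * t2" by arith
  show ?thesis unfolding eq by (rule gen[OF p1 p2])
qed

lemma bprof_sum:
  assumes "\<forall>i<N. br i z \<in> A i" and fin: "\<forall>i<N. finite (A i)"
  shows "(\<Sum>a\<in>PiE {..<N} A. w a * bprof N br z a) = w (restrict (\<lambda>i. br i z) {..<N})"
proof -
  define a0 where "a0 = restrict (\<lambda>i. br i z) {..<N}"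
  have a0: "a0 \<in> PiE {..<N} A" using assms by (auto simp: a0_def)
  have bp: "bprof N br z a = (if a = a0 then 1 else 0)" if "a \<in> PiE {..<N} A" for a
  proof (cases "a = a0")
    case True
    then show ?thesis by (simp add: bprof_def bi_def a0_def)
  next
    case False
    have "\<exists>i<N. a i \<noteq> br i z"
    proof (rule ccontr)
      assume "\<not> (\<exists>i<N. a i \<noteq> br i z)"
      then have "a = a0" using that by (auto simp: a0_def PiE_def extensional_def fun_eq_iff)
      then show False using False by simp
    qed
    then obtain i where i: "i < N" "a i \<noteq> br i z" by blast
    then have "bprof N br z a = 0" unfolding bprof_def
      by (intro prod_zero) (auto simp: bi_def)
    then show ?thesis using False by simp
  qed
  have "(\<Sum>a\<in>PiE {..<N} A. w a * bprof N br z a) = (\<Sum>a\<in>PiE {..<N} A. if a = a0 then w a else 0)"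
    by (intro sum.cong) (auto simp: bp)
  also have "\<dots> = w a0"
    using a0 fin by (subst sum.delta) (auto intro!: finite_PiE)
  finally show ?thesis by (simp add: a0_def)
qed

lemma bad_meas:
  fixes g :: "'z \<Rightarrow> real"
  assumes g: "g \<in> borel_measurable M"
  shows "{S\<in>space (PiM {..<n} (\<lambda>_. M)). t \<le> \<bar>emp_E n S g - c\<bar>} \<in> sets (PiM {..<n} (\<lambda>_. M))"
proof -
  have "(\<lambda>S. emp_E n S g) \<in> borel_measurable (PiM {..<n} (\<lambda>_. M))"
  proof -
    have "(\<lambda>S. g (S k)) \<in> borel_measurable (PiM {..<n} (\<lambda>_. M))" if "k < n" for k
      by (rule measurable_compose[where f="\<lambda>S. S k" and N=M]) (use g that in auto)
    then show ?thesis unfolding emp_E_def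
      by (intro borel_measurable_divide borel_measurable_sum) auto
  qed
  then have f: "(\<lambda>S. \<bar>emp_E n S g - c\<bar>) \<in> borel_measurable (PiM {..<n} (\<lambda>_. M))"
    by (intro borel_measurable_abs borel_measurable_diff borel_measurable_const)
  show ?thesis by (rule borel_measurable_le[OF borel_measurable_const f])
qed

lemma exp_bound:
  fixes L c :: real and n :: nat
  assumes L: "L \<ge> 1" and n: "n > 0" and c: "c > 0"
  shows "2 * exp (- 2 * real n * (sqrt (c * ln L / real n))\<^sup>2 / (2 * c)) = 2 / L"
proof -
  have "ln L \<ge> 0" using L by simp
  then have "(sqrt (c * ln L / real n))\<^sup>2 = c * ln L / real n" using c n by simp
  then have "- 2 * real n * (sqrt (c * ln L / real n))\<^sup>2 / (2 * c) = - ln L" using n c by simp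
  moreover have "exp (- ln L) = 1 / L" using L by (simp add: exp_minus inverse_eq_divide)
  ultimately show ?thesis by simp
qed

theorem lemma3:
  fixes M :: "('x \<times> (real^'d)) measure"
    and H :: "('x \<Rightarrow> real^'d) set"
    and N m n :: nat
    and A :: "nat \<Rightarrow> 'a set"
    and v :: "nat \<Rightarrow> 'a \<Rightarrow> real^'d \<Rightarrow> real"
    and br :: "nat \<Rightarrow> real^'d \<Rightarrow> 'a"
    and u :: "(nat \<Rightarrow> 'a) \<Rightarrow> real^'d \<Rightarrow> real"
    and \<gamma> C \<delta> :: real
  assumes M: "prob_space M"
    and y_cube: "\<forall>p\<in>space M. in_cube (snd p)"
    and H_fin: "finite H"
    and H_cube: "\<forall>h\<in>H. \<forall>x. in_cube (h x)"
    and A_fin: "\<forall>i<N. finite (A i) \<and> card (A i) = m"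
    and v_range: "\<forall>i<N. \<forall>a\<in>A i. \<forall>z. in_cube z \<longrightarrow> 0 \<le> v i a z \<and> v i a z \<le> 1"
    and br_argmax: "\<forall>i<N. \<forall>z. in_cube z \<longrightarrow>
                      br i z \<in> A i \<and> (\<forall>a'\<in>A i. v i a' z \<le> v i (br i z) z)"
    and u_range: "\<forall>a\<in>PiE {..<N} A. \<forall>z. in_cube z \<longrightarrow> 0 \<le> u a z \<and> u a z \<le> 1"
    and \<gamma>: "\<gamma> \<ge> 0"
    and meas_obj: "\<forall>h\<in>H. (\<lambda>p. \<Sum>a\<in>PiE {..<N} A. u a (snd p) * bprof N br (h (fst p)) a)
                          \<in> borel_measurable M"
    and meas_con: "\<forall>h\<in>H. \<forall>i<N. \<forall>a\<in>A i. \<forall>j.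
                     (\<lambda>p. (h (fst p) $ j - snd p $ j) * bi br i (h (fst p)) a) \<in> borel_measurable M"
    and n: "n > 0"
    and \<delta>: "0 < \<delta>" "\<delta> < 1"
  shows "\<exists>E \<in> sets (PiM {..<n} (\<lambda>_. M)).
           measure (PiM {..<n} (\<lambda>_. M)) E \<ge> 1 - \<delta> \<and>
           (\<forall>S\<in>E. \<forall>f\<in>Delta H. \<forall>lam\<in>LambdaC N A C.
              \<bar>Lag (\<lambda>g. integral\<^sup>L M g) H N A br u \<gamma> f lam
               - Lag (emp_E n S) H N A br u \<gamma> f lam\<bar>
              \<le> sqrt (ln (4 * real (card H) / \<delta>) / (2 * real n))
                + C * sqrt (8 * ln (4 * real (card H) * real N * real CARD('d) * real m / \<delta>) / real n))"
proof -
  interpret PP: product_prob_space "\<lambda>_. M" "{..<n}"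
    by (simp add: M product_prob_space.intro product_sigma_finite.intro prob_space_imp_sigma_finite product_prob_space_axioms.intro)
  define P where "P = PiM {..<n} (\<lambda>_. M)"
  define obj where "obj h = (\<lambda>p. \<Sum>a\<in>PiE {..<N} A. u a (snd p) * bprof N br (h (fst p)) a)" for h :: "'x \<Rightarrow> real^'d"
  define con where "con h i a j = (\<lambda>p. (h (fst p) $ j - snd p $ j) * bi br i (h (fst p)) a)"
    for h :: "'x \<Rightarrow> real^'d" and i a and j :: 'd
  define L1 where "L1 = 4 * real (card H) / \<delta>"
  define L2 where "L2 = 4 * real (card H) * real N * real CARD('d) * real m / \<delta>"
  define t1 where "t1 = sqrt (ln L1 / (2 * real n))"
  define t2 where "t2 = sqrt (8 * ln L2 / real n)"
  define B1 where "B1 h = {S\<in>space P. t1 \<le> \<bar>emp_E n S (obj h) - integral\<^sup>L M (obj h)\<bar>}" for h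
  define K where "K = Sigma H (\<lambda>_. Sigma {..<N} (\<lambda>i. A i \<times> (UNIV :: 'd set)))"
  define B2 where "B2 k = (case k of (h, i, a, j) \<Rightarrow>
      {S\<in>space P. t2 \<le> \<bar>emp_E n S (con h i a j) - integral\<^sup>L M (con h i a j)\<bar>})" for k
  define E where "E = space P - ((\<Union>h\<in>H. B1 h) \<union> (\<Union>k\<in>K. B2 k))"
  have finK: "finite K" unfolding K_def using H_fin A_fin
    by (intro finite_SigmaI) auto
  have B1s: "B1 h \<in> sets P" if "h \<in> H" for h
    unfolding B1_def P_def by (rule bad_meas) (use meas_obj that in \<open>simp add: obj_def\<close>)
  have B2s: "B2 k \<in> sets P" if "k \<in> K" for k
  proof -
    obtain h i a j where k: "k = (h, i, a, j)" by (cases k) auto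
    have "h \<in> H" "i < N" "a \<in> A i" using that k by (auto simp: K_def)
    then show ?thesis unfolding B2_def k P_def
      by (simp only: prod.case, intro bad_meas) (use meas_con in \<open>simp add: con_def\<close>)
  qed
  have U1s: "(\<Union>h\<in>H. B1 h) \<in> sets P" using B1s H_fin by (intro sets.finite_UN) auto
  have U2s: "(\<Union>k\<in>K. B2 k) \<in> sets P" using B2s finK by (intro sets.finite_UN) auto
  have Es: "E \<in> sets P" unfolding E_def using U1s U2s by auto
  have obj_b: "0 \<le> obj h p \<and> obj h p \<le> 1" if "h \<in> H" "p \<in> space M" for h p
  proof -
    have cz: "in_cube (h (fst p))" using H_cube that by auto
    have br: "\<forall>i<N. br i (h (fst p)) \<in> A i" using br_argmax cz by auto
    have "obj h p = u (restrict (\<lambda>i. br i (h (fst p))) {..<N}) (snd p)"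
      unfolding obj_def by (rule bprof_sum) (use br A_fin in auto)
    moreover have "restrict (\<lambda>i. br i (h (fst p))) {..<N} \<in> PiE {..<N} A" using br by auto
    ultimately show ?thesis using u_range y_cube that by auto
  qed
  have con_b: "-2 \<le> con h i a j p \<and> con h i a j p \<le> 2" if "h \<in> H" "p \<in> space M" for h i a j p
  proof -
    have "\<bar>h (fst p) $ j\<bar> \<le> 1" using H_cube that by (auto simp: in_cube_def)
    moreover have "\<bar>snd p $ j\<bar> \<le> 1" using y_cube that by (auto simp: in_cube_def)
    ultimately have "\<bar>h (fst p) $ j - snd p $ j\<bar> \<le> 2" by linarith
    moreover have "bi br i (h (fst p)) a = 0 \<or> bi br i (h (fst p)) a = 1" by (auto simp: bi_def)
    ultimately show ?thesis unfolding con_def by auto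
  qed
  have P1: "measure P (B1 h) \<le> \<delta> / (2 * real (card H))" if h: "h \<in> H" for h
  proof -
    have cH: "card H \<ge> 1" using h H_fin by (metis One_nat_def Suc_leI card_gt_0_iff empty_iff)
    have L1: "L1 \<ge> 1" unfolding L1_def using cH \<delta> by (simp add: field_simps)
    have lnL1: "ln L1 \<ge> 0" using L1 by simp
    have "measure P (B1 h) \<le> 2 * exp (- 2 * real n * t1\<^sup>2 / (1 - 0)\<^sup>2)"
      unfolding B1_def P_def
      by (rule hoeff_PiM[OF M]) (use meas_obj h obj_b n lnL1 in \<open>auto simp: obj_def t1_def\<close>)
    also have "- 2 * real n * t1\<^sup>2 / (1 - 0)\<^sup>2 = - ln L1"
    proof -
      have "ln L1 \<ge> 0" using L1 by simp
      then have "t1\<^sup>2 = ln L1 / (2 * real n)" unfolding t1_def using n by simp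
      then show ?thesis using n by simp
    qed
    also have "exp (- ln L1) = 1 / L1" using L1 by (simp add: exp_minus inverse_eq_divide)
    also have "2 * (1 / L1) = \<delta> / (2 * real (card H))" unfolding L1_def using \<delta> cH by (simp add: field_simps)
    finally show ?thesis .
  qed
  have P2: "measure P (B2 k) \<le> \<delta> / (2 * real (card K))" if k: "k \<in> K" for k
  proof -
    obtain h i a j where kk: "k = (h, i, a, j)" by (cases k) auto
    have hia: "h \<in> H" "i < N" "a \<in> A i" using k kk by (auto simp: K_def)
    have cH: "card H \<ge> 1" using hia H_fin by (metis One_nat_def Suc_leI card_gt_0_iff empty_iff)
    have cm: "m \<ge> 1" using hia A_fin by (metis One_nat_def Suc_leI card_gt_0_iff empty_iff)
    have cN: "N \<ge> 1" using hia by simp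
    have cd: "CARD('d) \<ge> 1" by (simp add: Suc_leI)
    have cK: "card K = card H * N * CARD('d) * m"
    proof -
      have "card (SIGMA i:{..<N}. A i \<times> (UNIV :: 'd set)) = (\<Sum>i<N. card (A i \<times> (UNIV :: 'd set)))"
        using A_fin by (intro card_SigmaI) auto
      also have "\<dots> = (\<Sum>i<N. m * CARD('d))"
        using A_fin by (intro sum.cong refl) (simp add: card_cartesian_product)
      finally have "card (SIGMA i:{..<N}. A i \<times> (UNIV :: 'd set)) = N * (m * CARD('d))" by simp
      then have "card K = card H * (N * (m * CARD('d)))"
        unfolding K_def by (simp add: card_cartesian_product)
      then show ?thesis by simp
    qed
    have natge: "card H * N * CARD('d) * m \<ge> 1" using cH cm cN cd
      by (metis Suc_le_eq One_nat_def mult_pos_pos)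
    define X where "X = real (card H) * real N * real CARD('d) * real m"
    have Xeq: "X = real (card K)" unfolding X_def cK by simp
    have cK1: "card K \<ge> 1" using natge cK by simp
    have prodge: "X \<ge> 1" unfolding Xeq using cK1 by simp
    have L2eq: "L2 = 4 * X / \<delta>" unfolding L2_def X_def by simp
    have L2: "L2 \<ge> 1" unfolding L2eq using prodge \<delta> by (simp add: field_simps)
    have lnL2: "ln L2 \<ge> 0" using L2 by simp
    have "measure P (B2 k) \<le> 2 * exp (- 2 * real n * t2\<^sup>2 / (2 - (-2))\<^sup>2)"
      unfolding B2_def P_def kk prod.case
      by (rule hoeff_PiM[OF M]) (use meas_con hia con_b n lnL2 in \<open>auto simp: con_def t2_def\<close>)
    also have "- 2 * real n * t2\<^sup>2 / (2 - (-2))\<^sup>2 = - ln L2"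
    proof -
      have "ln L2 \<ge> 0" using L2 by simp
      then have "t2\<^sup>2 = 8 * ln L2 / real n" unfolding t2_def using n by simp
      then show ?thesis using n by (simp add: power2_eq_square)
    qed
    also have "exp (- ln L2) = 1 / L2" using L2 by (simp add: exp_minus inverse_eq_divide)
    also have "2 * (1 / L2) = \<delta> / (2 * X)" unfolding L2eq using \<delta> prodge by (simp add: field_simps)
    finally show ?thesis unfolding Xeq .
  qed
  have U1: "measure P (\<Union>h\<in>H. B1 h) \<le> \<delta> / 2"
  proof -
    have "measure P (\<Union>h\<in>H. B1 h) \<le> (\<Sum>h\<in>H. measure P (B1 h))"
      unfolding P_def using B1s H_fin by (intro PP.P.finite_measure_subadditive_finite) (auto simp: P_def)
    also have "\<dots> \<le> (\<Sum>h\<in>H. \<delta> / (2 * real (card H)))" by (intro sum_mono P1)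
    also have "\<dots> \<le> \<delta> / 2" using \<delta> by (cases "card H = 0") auto
    finally show ?thesis .
  qed
  have U2: "measure P (\<Union>k\<in>K. B2 k) \<le> \<delta> / 2"
  proof -
    have "measure P (\<Union>k\<in>K. B2 k) \<le> (\<Sum>k\<in>K. measure P (B2 k))"
      unfolding P_def using B2s finK by (intro PP.P.finite_measure_subadditive_finite) (auto simp: P_def)
    also have "\<dots> \<le> (\<Sum>k\<in>K. \<delta> / (2 * real (card K)))" by (intro sum_mono P2)
    also have "\<dots> \<le> \<delta> / 2" using \<delta> by (cases "card K = 0") auto
    finally show ?thesis .
  qed
  have mE: "measure P E \<ge> 1 - \<delta>"
  proof -
    have "measure P E = 1 - measure P ((\<Union>h\<in>H. B1 h) \<union> (\<Union>k\<in>K. B2 k))"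
      unfolding E_def P_def using U1s U2s by (intro PP.P.prob_compl) (auto simp: P_def)
    moreover have "measure P ((\<Union>h\<in>H. B1 h) \<union> (\<Union>k\<in>K. B2 k)) \<le> measure P (\<Union>h\<in>H. B1 h) + measure P (\<Union>k\<in>K. B2 k)"
      unfolding P_def using U1s U2s by (intro measure_Un_le) (auto simp: P_def)
    ultimately show ?thesis using U1 U2 by linarith
  qed
  have good: "\<bar>Lag (\<lambda>g. integral\<^sup>L M g) H N A br u \<gamma> f lam - Lag (emp_E n S) H N A br u \<gamma> f lam\<bar> \<le> t1 + C * t2"
    if S: "S \<in> E" and f: "f \<in> Delta H" and lam: "lam \<in> LambdaC N A C" for S f lam
  proof (rule lag_diff[OF f lam])
    have lnL2: "ln L2 \<ge> 0"
    proof (cases "card H * N * CARD('d) * m = 0")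
      case True
      then have "L2 = 0" unfolding L2_def by auto
      then show ?thesis by simp
    next
      case False
      then have "card H * N * CARD('d) * m \<ge> 1" by simp
      then have "real (card H * N * CARD('d) * m) \<ge> 1" by linarith
      then have "real (card H) * real N * real CARD('d) * real m \<ge> 1" by simp
      then have "L2 \<ge> 1" unfolding L2_def using \<delta> by (simp add: field_simps)
      then show ?thesis by simp
    qed
    show "t2 \<ge> 0" unfolding t2_def using lnL2 n by simp
    have Ssp: "S \<in> space P" using S by (simp add: E_def)
    show "\<forall>h\<in>H. \<bar>integral\<^sup>L M (\<lambda>p. \<Sum>a\<in>PiE {..<N} A. u a (snd p) * bprof N br (h (fst p)) a)
                 - emp_E n S (\<lambda>p. \<Sum>a\<in>PiE {..<N} A. u a (snd p) * bprof N br (h (fst p)) a)\<bar> \<le> t1"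
    proof
      fix h assume h: "h \<in> H"
      then have "S \<notin> B1 h" using S by (auto simp: E_def)
      then show "\<bar>integral\<^sup>L M (\<lambda>p. \<Sum>a\<in>PiE {..<N} A. u a (snd p) * bprof N br (h (fst p)) a)
                 - emp_E n S (\<lambda>p. \<Sum>a\<in>PiE {..<N} A. u a (snd p) * bprof N br (h (fst p)) a)\<bar> \<le> t1"
        using Ssp by (auto simp: B1_def obj_def abs_minus_commute)
    qed
    show "\<forall>h\<in>H. \<forall>i<N. \<forall>a\<in>A i. \<forall>j. \<bar>integral\<^sup>L M (\<lambda>p. (h (fst p) $ j - snd p $ j) * bi br i (h (fst p)) a)
                 - emp_E n S (\<lambda>p. (h (fst p) $ j - snd p $ j) * bi br i (h (fst p)) a)\<bar> \<le> t2"
    proof (intro ballI allI impI)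
      fix h i a j assume h: "h \<in> H" and i: "i < N" and a: "a \<in> A i"
      then have "(h, i, a, j) \<in> K" by (auto simp: K_def)
      then have "S \<notin> B2 (h, i, a, j)" using S by (auto simp: E_def)
      then show "\<bar>integral\<^sup>L M (\<lambda>p. (h (fst p) $ j - snd p $ j) * bi br i (h (fst p)) a)
                 - emp_E n S (\<lambda>p. (h (fst p) $ j - snd p $ j) * bi br i (h (fst p)) a)\<bar> \<le> t2"
        using Ssp by (auto simp: B2_def con_def abs_minus_commute)
    qed
  qed
  show ?thesis
    apply (rule bexI[where x=E])
    using mE good Es unfolding P_def t1_def t2_def L1_def L2_def by auto
qed

end
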